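(* Let $K\subseteq L$ be a finite extension of $F$-finite fields of characteristic $p>0$ and let $\mathfrak T\colon L\to K$ be a non-zero $K$-linear map. Then every $K$-linear map $\phi\colon K^{1/p^e}\to K$ has a unique $\mathfrak T$-transpose, i.e. there is a unique $L$-linear map $\phi_{\mathfrak T}\colon L^{1/p^e}\to L$ with $\mathfrak T\circ\phi_{\mathfrak T}=\phi\circ\mathfrak T^{1/p^e}$.
   Context: $K^{1/p^e}\subseteq L^{1/p^e}$ are the fields of $p^e$-th roots in an algebraic closure; $\mathfrak T^{1/p^e}\colon L^{1/p^e}\to K^{1/p^e}$ is $x^{1/p^e}\mapsto\mathfrak T(x)^{1/p^e}$. $F$-finite means $[K:K^p]<\infty$. *)

theory Defs
  imports "HOL-Computational_Algebra.Polynomial"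
begin

text \<open>All fields live inside a fixed algebraically closed ambient field of type 'a.\<close>

definition subfield_of :: "'a::field set \<Rightarrow> bool" where
  "subfield_of K \<longleftrightarrow> 0 \<in> K \<and> 1 \<in> K \<and>
     (\<forall>x\<in>K. \<forall>y\<in>K. x + y \<in> K \<and> x * y \<in> K) \<and>
     (\<forall>x\<in>K. - x \<in> K \<and> inverse x \<in> K)"

definition span_over :: "'a::field set \<Rightarrow> 'a set \<Rightarrow> 'a set" where
  "span_over K S = {(\<Sum>s\<in>S. c s * s) | c. \<forall>s\<in>S. c s \<in> K}"

definition fin_dim_over :: "'a::field set \<Rightarrow> 'a set \<Rightarrow> bool" where
  "fin_dim_over K V \<longleftrightarrow> (\<exists>S. finite S \<and> S \<subseteq> V \<and> V = span_over K S)"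

definition finite_extension :: "'a::field set \<Rightarrow> 'a set \<Rightarrow> bool" where
  "finite_extension K L \<longleftrightarrow> subfield_of K \<and> subfield_of L \<and> K \<subseteq> L \<and> fin_dim_over K L"

definition F_finite :: "'a::field set \<Rightarrow> bool" where
  "F_finite K \<longleftrightarrow> fin_dim_over ((\<lambda>x. x ^ CHAR('a)) ` K) K"

text \<open>K^{1/q}: the q-th roots of elements of K in the ambient algebraically closed field.\<close>
definition root_field :: "nat \<Rightarrow> 'a::field set \<Rightarrow> 'a set" where
  "root_field q K = {x. x ^ q \<in> K}"

definition lin_over :: "'a::field set \<Rightarrow> 'a set \<Rightarrow> 'a set \<Rightarrow> ('a \<Rightarrow> 'a) \<Rightarrow> bool" where
  "lin_over K V W f \<longleftrightarrow> (\<forall>x\<in>V. f x \<in> W) \<and>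
     (\<forall>x\<in>V. \<forall>y\<in>V. f (x + y) = f x + f y) \<and>
     (\<forall>a\<in>K. \<forall>x\<in>V. f (a * x) = a * f x)"

text \<open>T^{1/q} : x^{1/q} \<mapsto> T(x)^{1/q}, i.e. y \<mapsto> (T(y^q))^{1/q}.\<close>
definition root_map :: "nat \<Rightarrow> ('a::field \<Rightarrow> 'a) \<Rightarrow> 'a \<Rightarrow> 'a" where
  "root_map q T y = (THE z. z ^ q = T (y ^ q))"

end

theory Submission imports Defs "HOL-Computational_Algebra.Primes"
begin

lemma sfE:
  assumes "subfield_of K"
  shows "0 \<in> K" "1 \<in> K" "\<And>x y. x \<in> K \<Longrightarrow> y \<in> K \<Longrightarrow> x + y \<in> K"
    "\<And>x y. x \<in> K \<Longrightarrow> y \<in> K \<Longrightarrow> x * y \<in> K"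
    "\<And>x. x \<in> K \<Longrightarrow> - x \<in> K" "\<And>x. x \<in> K \<Longrightarrow> inverse x \<in> K"
    "\<And>x y. x \<in> K \<Longrightarrow> y \<in> K \<Longrightarrow> x - y \<in> K"
    "\<And>x y. x \<in> K \<Longrightarrow> y \<in> K \<Longrightarrow> x / y \<in> K"
proof -
  note a = assms[unfolded subfield_of_def]
  show "0 \<in> K" "1 \<in> K" using a by blast+
  show "\<And>x y. x \<in> K \<Longrightarrow> y \<in> K \<Longrightarrow> x + y \<in> K" using a by blast
  show m: "\<And>x y. x \<in> K \<Longrightarrow> y \<in> K \<Longrightarrow> x * y \<in> K" using a by blast
  show n: "\<And>x. x \<in> K \<Longrightarrow> - x \<in> K" using a by blast
  show i: "\<And>x. x \<in> K \<Longrightarrow> inverse x \<in> K" using a by blast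
  show "\<And>x y. x \<in> K \<Longrightarrow> y \<in> K \<Longrightarrow> x - y \<in> K"
    using a n by (metis diff_conv_add_uminus)
  show "\<And>x y. x \<in> K \<Longrightarrow> y \<in> K \<Longrightarrow> x / y \<in> K"
    using m i by (metis divide_inverse)
qed

lemma sf_sum:
  assumes "subfield_of K" "\<And>i. i \<in> A \<Longrightarrow> f i \<in> K"
  shows "sum f A \<in> K"
  using assms(2)
proof (induction A rule: infinite_finite_induct)
  case (infinite A) then show ?case using sfE[OF assms(1)] by simp
next
  case empty then show ?case using sfE[OF assms(1)] by simp
next
  case (insert x F) then show ?case using sfE[OF assms(1)] by simp
qed

lemma hom_system:
  fixes A :: "'e \<Rightarrow> 'u \<Rightarrow> 'a::field"
  assumes K: "subfield_of K" and "finite E"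
  shows "finite U \<Longrightarrow> card E < card U \<Longrightarrow> (\<forall>e\<in>E. \<forall>u\<in>U. A e u \<in> K) \<Longrightarrow>
    \<exists>x. (\<forall>u\<in>U. x u \<in> K) \<and> (\<exists>u\<in>U. x u \<noteq> 0) \<and> (\<forall>e\<in>E. (\<Sum>u\<in>U. A e u * x u) = 0)"
  using assms(2)
proof (induction E arbitrary: U A rule: finite_induct)
  case empty
  then have "U \<noteq> {}" by auto
  then show ?case using sfE[OF K] by (intro exI[of _ "\<lambda>_. 1"]) auto
next
  case (insert e0 E U A)
  show ?case
  proof (cases "\<forall>u\<in>U. A e0 u = 0")
    case True
    from insert.IH[of U A] insert.prems insert.hyps obtain x where
      x: "\<forall>u\<in>U. x u \<in> K" "\<exists>u\<in>U. x u \<noteq> 0" "\<forall>e\<in>E. (\<Sum>u\<in>U. A e u * x u) = 0"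
      by auto
    show ?thesis using x True by (intro exI[of _ x]) auto
  next
    case False
    then obtain u0 where u0: "u0 \<in> U" "A e0 u0 \<noteq> 0" by auto
    define a where "a = A e0 u0"
    define U' where "U' = U - {u0}"
    define A' where "A' = (\<lambda>e u. A e u - A e u0 * A e0 u / a)"
    have cU: "card U = Suc (card U')" using u0 insert.prems(1) unfolding U'_def
      using card_gt_0_iff[of U] by auto
    have fU': "finite U'" using insert.prems(1) unfolding U'_def by simp
    have cE: "card E < card U'" using insert.prems(2) insert.hyps cU by simp
    have AK: "\<forall>e\<in>E. \<forall>u\<in>U'. A' e u \<in> K"
      using insert.prems(3) u0 unfolding A'_def U'_def a_def
      by (intro ballI sfE(7)[OF K] sfE(4)[OF K] sfE(8)[OF K]) auto
    obtain x' where
      x': "\<forall>u\<in>U'. x' u \<in> K" "\<exists>u\<in>U'. x' u \<noteq> 0" "\<forall>e\<in>E. (\<Sum>u\<in>U'. A' e u * x' u) = 0"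
      using insert.IH[OF fU' cE AK] by blast
    define s where "s = (\<Sum>u\<in>U'. A e0 u * x' u)"
    define x where "x = (\<lambda>u. if u = u0 then - s / a else x' u)"
    have Ueq: "U = insert u0 U'" "u0 \<notin> U'" using u0 unfolding U'_def by auto
    have sumx: "(\<Sum>u\<in>U. B u * x u) = B u0 * (- s / a) + (\<Sum>u\<in>U'. B u * x' u)" for B
    proof -
      have "(\<Sum>u\<in>U. B u * x u) = B u0 * x u0 + (\<Sum>u\<in>U'. B u * x u)"
        using Ueq fU' by simp
      also have "(\<Sum>u\<in>U'. B u * x u) = (\<Sum>u\<in>U'. B u * x' u)"
        using Ueq(2) by (intro sum.cong) (auto simp: x_def)
      finally show ?thesis by (simp add: x_def)
    qed
    have sK: "s \<in> K" unfolding s_def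
      using insert.prems(3) x'(1) Ueq by (intro sf_sum[OF K] sfE(4)[OF K]) auto
    show ?thesis
    proof (intro exI[of _ x] conjI ballI)
      fix u assume "u \<in> U"
      have aK: "a \<in> K" using insert.prems(3) u0 unfolding a_def by simp
      show "x u \<in> K"
      proof (cases "u = u0")
        case True
        then show ?thesis unfolding x_def using sfE(8)[OF K sfE(5)[OF K sK] aK] by simp
      next
        case False
        then have "u \<in> U'" using \<open>u \<in> U\<close> Ueq by simp
        then show ?thesis unfolding x_def using False x'(1) by simp
      qed
    next
      show "\<exists>u\<in>U. x u \<noteq> 0" using x'(2) Ueq unfolding x_def by auto
    next
      fix e assume "e \<in> insert e0 E"
      then show "(\<Sum>u\<in>U. A e u * x u) = 0"
      proof
        assume "e = e0"
        then show ?thesis using sumx[of "A e0"] u0 unfolding s_def a_def by simp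
      next
        assume eE: "e \<in> E"
        have "(\<Sum>u\<in>U'. A' e u * x' u) = (\<Sum>u\<in>U'. A e u * x' u) - A e u0 / a * s"
          unfolding A'_def s_def by (simp add: algebra_simps sum_subtractf sum_distrib_left)
        then show ?thesis using sumx[of "A e"] x'(3) eE by (simp add: algebra_simps)
      qed
    qed
  qed
qed


lemma lin_zero:
  assumes "lin_over K V W g" "0 \<in> V"
  shows "g 0 = 0"
proof -
  have "g (0 + 0) = g 0 + g 0" using assms unfolding lin_over_def by blast
  then have "g 0 + g 0 = g 0 + 0" by simp
  then show ?thesis by (rule add_left_imp_eq)
qed

lemma lin_sum:
  assumes g: "lin_over K L W g" and L: "subfield_of L" and KL: "K \<subseteq> L"
    and B: "B \<subseteq> L" and d: "\<forall>b\<in>B. d b \<in> K"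
  shows "g (\<Sum>b\<in>B. d b * b) = (\<Sum>b\<in>B. d b * g b)"
  using B d
proof (induction B rule: infinite_finite_induct)
  case (infinite A) then show ?case using lin_zero[OF g sfE(1)[OF L]] by simp
next
  case empty then show ?case using lin_zero[OF g sfE(1)[OF L]] by simp
next
  case (insert x F)
  have xL: "x \<in> L" "d x \<in> K" using insert.prems by auto
  have sL: "(\<Sum>b\<in>F. d b * b) \<in> L"
    using insert.prems KL by (intro sf_sum[OF L] sfE(4)[OF L]) auto
  have dxL: "d x * x \<in> L" using xL KL by (intro sfE(4)[OF L]) auto
  have "g (\<Sum>b\<in>insert x F. d b * b) = g (d x * x + (\<Sum>b\<in>F. d b * b))"
    using insert.hyps by simp
  also have "\<dots> = g (d x * x) + g (\<Sum>b\<in>F. d b * b)"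
    using g sL dxL unfolding lin_over_def by blast
  also have "g (d x * x) = d x * g x" using g xL unfolding lin_over_def by blast
  also have "g (\<Sum>b\<in>F. d b * b) = (\<Sum>b\<in>F. d b * g b)" using insert by auto
  finally show ?case using insert.hyps by simp
qed

definition indep_over :: "'a::field set \<Rightarrow> 'a set \<Rightarrow> bool" where
  "indep_over K B \<longleftrightarrow> (\<forall>c. (\<forall>b\<in>B. c b \<in> K) \<longrightarrow> (\<Sum>b\<in>B. c b * b) = 0 \<longrightarrow> (\<forall>b\<in>B. c b = 0))"

lemma span_sub:
  assumes L: "subfield_of L" and KL: "K \<subseteq> L" and B: "B \<subseteq> L"
  shows "span_over K B \<subseteq> L"
  using assms unfolding span_over_def
  by (auto intro!: sf_sum[OF L] sfE(4)[OF L])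

lemma basis_exists:
  assumes K: "subfield_of K" and L: "subfield_of L" and KL: "K \<subseteq> L"
    and S: "finite S" "S \<subseteq> L" "L = span_over K S"
  shows "\<exists>B. finite B \<and> B \<subseteq> L \<and> L = span_over K B \<and> indep_over K B"
proof -
  define P where "P = (\<lambda>B. B \<subseteq> S \<and> L = span_over K B)"
  have "P S" using S unfolding P_def by simp
  then obtain B where PB: "P B" and min: "\<And>B'. P B' \<Longrightarrow> card B \<le> card B'"
    using ex_has_least_nat[of P S card] by blast
  have BS: "B \<subseteq> S" and LB: "L = span_over K B" using PB unfolding P_def by auto
  have fB: "finite B" using BS S(1) finite_subset by blast
  have BL: "B \<subseteq> L" using BS S(2) by blast
  have "indep_over K B"
    unfolding indep_over_def
  proof (intro allI impI ballI, rule ccontr)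
    fix c b0
    assume cK: "\<forall>b\<in>B. c b \<in> K" and sc: "(\<Sum>b\<in>B. c b * b) = 0" and b0: "b0 \<in> B" and nz: "c b0 \<noteq> 0"
    define B' where "B' = B - {b0}"
    have Beq: "B = insert b0 B'" "b0 \<notin> B'" "finite B'" using b0 fB unfolding B'_def by auto
    have rel: "(\<Sum>b\<in>B'. c b * b) = - (c b0 * b0)"
      using sc Beq by (simp add: add_eq_0_iff2)
    have "L = span_over K B'"
    proof
      show "span_over K B' \<subseteq> L" using span_sub[OF L KL] BL Beq by blast
    next
      show "L \<subseteq> span_over K B'"
      proof
        fix y assume "y \<in> L"
        then obtain d where d: "\<forall>b\<in>B. d b \<in> K" and y: "y = (\<Sum>b\<in>B. d b * b)"
          using LB unfolding span_over_def by blast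
        define d' where "d' = (\<lambda>b. d b - d b0 * c b / c b0)"
        have "(\<Sum>b\<in>B'. d' b * b) = (\<Sum>b\<in>B'. d b * b) - d b0 / c b0 * (\<Sum>b\<in>B'. c b * b)"
          unfolding d'_def by (simp add: algebra_simps sum_subtractf sum_distrib_left)
        also have "\<dots> = (\<Sum>b\<in>B'. d b * b) + d b0 * b0"
          using nz by (simp add: rel)
        also have "\<dots> = y" using y Beq by (simp add: add.commute)
        finally have "y = (\<Sum>b\<in>B'. d' b * b)" by simp
        moreover have "\<forall>b\<in>B'. d' b \<in> K"
          unfolding d'_def using d cK Beq
          by (intro ballI sfE(7)[OF K] sfE(8)[OF K] sfE(4)[OF K]) auto
        ultimately show "y \<in> span_over K B'" unfolding span_over_def by blast
      qed
    qed
    then have "P B'" using BS unfolding P_def B'_def by auto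
    then have "card B \<le> card B'" by (rule min)
    moreover have "card B = Suc (card B')" using Beq by simp
    ultimately show False by simp
  qed
  then show ?thesis using fB BL LB by blast
qed

lemma nondeg:
  assumes L: "subfield_of L" and c: "c \<in> L" and T: "\<And>y. y \<in> L \<Longrightarrow> T (c * y) = 0"
    and x0: "x0 \<in> L" "T x0 \<noteq> 0"
  shows "c = 0"
proof (rule ccontr)
  assume "c \<noteq> 0"
  then have "c * (inverse c * x0) = x0" by simp
  moreover have "inverse c * x0 \<in> L" using c x0 by (intro sfE(4)[OF L] sfE(6)[OF L])
  ultimately show False using T x0 by metis
qed


lemma duality:
  assumes ext: "finite_extension K L" and T: "lin_over K L K T" and x0: "x0 \<in> L" "T x0 \<noteq> 0"
    and f: "lin_over K L K f"
  shows "\<exists>c\<in>L. \<forall>y\<in>L. f y = T (c * y)"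
proof -
  have K: "subfield_of K" and L: "subfield_of L" and KL: "K \<subseteq> L" and fd: "fin_dim_over K L"
    using ext unfolding finite_extension_def by auto
  obtain S where S: "finite S" "S \<subseteq> L" "L = span_over K S" using fd unfolding fin_dim_over_def by blast
  obtain B where B: "finite B" "B \<subseteq> L" "L = span_over K B" "indep_over K B"
    using basis_exists[OF K L KL S] by blast
  define U where "U = insert None (Some ` B)"
  define A where "A = (\<lambda>b u. case u of None \<Rightarrow> f b | Some b' \<Rightarrow> T (b' * b))"
  have fU: "finite U" using B(1) unfolding U_def by simp
  have cU: "card U = Suc (card B)" using B(1) unfolding U_def
    by (simp add: card_image)
  have AK: "\<forall>e\<in>B. \<forall>u\<in>U. A e u \<in> K"
  proof (intro ballI)
    fix e u assume e: "e \<in> B" and u: "u \<in> U"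
    show "A e u \<in> K"
    proof (cases u)
      case None then show ?thesis using f e B(2) unfolding A_def lin_over_def by auto
    next
      case (Some b')
      then have "b' \<in> L" using u B(2) unfolding U_def by auto
      then have "b' * e \<in> L" using e B(2) by (intro sfE(4)[OF L]) auto
      then show ?thesis using Some T unfolding A_def lin_over_def by auto
    qed
  qed
  obtain x where xK: "\<forall>u\<in>U. x u \<in> K" and xnz: "\<exists>u\<in>U. x u \<noteq> 0"
    and xs: "\<forall>e\<in>B. (\<Sum>u\<in>U. A e u * x u) = 0"
    using hom_system[OF K B(1) fU _ AK] cU by auto
  define c0 where "c0 = (\<Sum>b'\<in>B. x (Some b') * b')"
  have xSK: "\<forall>b\<in>B. x (Some b) \<in> K" using xK unfolding U_def by auto
  have xNK: "x None \<in> K" using xK unfolding U_def by auto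
  have c0L: "c0 \<in> L" unfolding c0_def using xSK KL B(2)
    by (intro sf_sum[OF L] sfE(4)[OF L]) auto
  have linTb: "lin_over K L K (\<lambda>y. T (y * b))" if "b \<in> L" for b
    unfolding lin_over_def
  proof (intro conjI ballI)
    fix y assume "y \<in> L" then show "T (y * b) \<in> K" using T that sfE(4)[OF L] unfolding lin_over_def by blast
  next
    fix y z assume "y \<in> L" "z \<in> L"
    then show "T ((y + z) * b) = T (y * b) + T (z * b)"
      using T that sfE(4)[OF L] unfolding lin_over_def by (metis distrib_right)
  next
    fix a y assume "a \<in> K" "y \<in> L"
    then show "T (a * y * b) = a * T (y * b)"
      using T that sfE(4)[OF L] unfolding lin_over_def by (metis mult.assoc)
  qed
  have onB: "x None * f b + T (c0 * b) = 0" if b: "b \<in> B" for b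
  proof -
    have bL: "b \<in> L" using b B(2) by auto
    have "T (c0 * b) = (\<Sum>b'\<in>B. x (Some b') * T (b' * b))"
      unfolding c0_def using lin_sum[OF linTb[OF bL] L KL B(2) xSK] .
    moreover have "(\<Sum>u\<in>U. A b u * x u) = f b * x None + (\<Sum>b'\<in>B. T (b' * b) * x (Some b'))"
      unfolding U_def using B(1) by (simp add: sum.reindex A_def)
    ultimately show ?thesis using xs b by (simp add: mult.commute)
  qed
  define g where "g = (\<lambda>y. x None * f y + T (c0 * y))"
  have lin_g: "lin_over K L K g"
    unfolding lin_over_def g_def
  proof (intro conjI ballI)
    fix y assume y: "y \<in> L"
    have "f y \<in> K" "T (c0 * y) \<in> K" using f T y c0L sfE(4)[OF L] unfolding lin_over_def by blast+
    then show "x None * f y + T (c0 * y) \<in> K" using xNK by (intro sfE(3)[OF K] sfE(4)[OF K])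
  next
    fix y z assume y: "y \<in> L" and z: "z \<in> L"
    have "f (y + z) = f y + f z" using f y z unfolding lin_over_def by blast
    moreover have "T (c0 * (y + z)) = T (c0 * y) + T (c0 * z)"
      using T y z c0L sfE(4)[OF L] unfolding lin_over_def by (metis distrib_left)
    ultimately show "x None * f (y + z) + T (c0 * (y + z)) = x None * f y + T (c0 * y) + (x None * f z + T (c0 * z))"
      by (simp add: algebra_simps)
  next
    fix a y assume a: "a \<in> K" and y: "y \<in> L"
    have "f (a * y) = a * f y" using f a y unfolding lin_over_def by blast
    moreover have "T (c0 * (a * y)) = a * T (c0 * y)"
    proof -
      have "c0 * (a * y) = a * (c0 * y)" by (simp add: algebra_simps)
      moreover have "c0 * y \<in> L" using c0L y by (rule sfE(4)[OF L])
      ultimately show ?thesis using T a unfolding lin_over_def by metis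
    qed
    ultimately show "x None * f (a * y) + T (c0 * (a * y)) = a * (x None * f y + T (c0 * y))"
      by (simp add: algebra_simps)
  qed
  have g0: "g y = 0" if y: "y \<in> L" for y
  proof -
    obtain d where d: "\<forall>b\<in>B. d b \<in> K" and yd: "y = (\<Sum>b\<in>B. d b * b)"
      using y B(3) unfolding span_over_def by blast
    have "g y = (\<Sum>b\<in>B. d b * g b)" unfolding yd using lin_sum[OF lin_g L KL B(2) d] .
    also have "\<dots> = 0" using onB unfolding g_def by simp
    finally show ?thesis .
  qed
  show ?thesis
  proof (cases "x None = 0")
    case True
    then have Tz: "\<And>y. y \<in> L \<Longrightarrow> T (c0 * y) = 0" using g0 unfolding g_def by simp
    have "c0 = 0" by (rule nondeg[OF L c0L Tz x0])
    then have "\<forall>b\<in>B. x (Some b) = 0"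
      using spec[OF B(4)[unfolded indep_over_def], of "\<lambda>b. x (Some b)"] xSK unfolding c0_def by blast
    then show ?thesis using xnz True unfolding U_def by auto
  next
    case False
    define c where "c = - c0 / x None"
    have m1: "- 1 / x None \<in> K" using xNK sfE(2)[OF K] by (intro sfE(8)[OF K] sfE(5)[OF K])
    have cL: "c \<in> L" unfolding c_def using c0L xNK KL
      by (intro sfE(8)[OF L] sfE(5)[OF L]) auto
    have "f y = T (c * y)" if y: "y \<in> L" for y
    proof -
      have "c * y = (- 1 / x None) * (c0 * y)" unfolding c_def by simp
      moreover have "c0 * y \<in> L" using c0L y by (rule sfE(4)[OF L])
      ultimately have "T (c * y) = (- 1 / x None) * T (c0 * y)" using T m1 unfolding lin_over_def by metis
      also have "T (c0 * y) = - (x None * f y)" using g0[OF y] unfolding g_def by (simp add: add_eq_0_iff2)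
      finally show ?thesis using False by simp
    qed
    then show ?thesis using cL by blast
  qed
qed


lemma frob_add:
  assumes "prime CHAR('a::field)" "q = CHAR('a) ^ e"
  shows "((x::'a) + y) ^ q = x ^ q + y ^ q"
  using freshmans_dream'[OF assms] .

lemma frob_inj:
  assumes "prime CHAR('a::field)" "q = CHAR('a) ^ e" "(x::'a) ^ q = y ^ q"
  shows "x = y"
proof -
  have "x ^ q = (x - y) ^ q + y ^ q" using frob_add[OF assms(1,2), of "x - y" y] by simp
  then have "(x - y) ^ q = 0" using assms(3) by simp
  then show ?thesis by simp
qed

lemma root_map_eq:
  fixes T :: "'a::alg_closed_field \<Rightarrow> 'a"
  assumes "prime CHAR('a)" "q = CHAR('a) ^ e"
  shows "root_map q T y ^ q = T (y ^ q)"
proof -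
  have q0: "q > 0" using assms prime_gt_0_nat by simp
  obtain z where z: "z ^ q = T (y ^ q)" using nth_root_exists[OF q0] by blast
  have "\<exists>!z. z ^ q = T (y ^ q)" using z frob_inj[OF assms] by metis
  then show ?thesis unfolding root_map_def by (rule theI')
qed

lemma root_map_unique:
  fixes T :: "'a::alg_closed_field \<Rightarrow> 'a"
  assumes "prime CHAR('a)" "q = CHAR('a) ^ e" "z ^ q = T (y ^ q)"
  shows "root_map q T y = z"
  using frob_inj[OF assms(1,2)] root_map_eq[OF assms(1,2)] assms(3) by metis

lemma sf_pow:
  assumes "subfield_of L" "x \<in> L" shows "x ^ n \<in> L"
  by (induction n) (use sfE[OF assms(1)] assms(2) in auto)


theorem proposition5p4:
  fixes K L :: "'a::alg_closed_field set"
    and T \<phi> :: "'a \<Rightarrow> 'a"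
    and p e :: nat
  assumes "prime p" and "CHAR('a) = p"
    and "finite_extension K L"
    and "F_finite K" and "F_finite L"
    and "lin_over K L K T" and "\<exists>x\<in>L. T x \<noteq> 0"
    and "lin_over K (root_field (p ^ e) K) K \<phi>"
  shows "\<exists>\<psi>. lin_over L (root_field (p ^ e) L) L \<psi> \<and>
           (\<forall>y\<in>root_field (p ^ e) L. T (\<psi> y) = \<phi> (root_map (p ^ e) T y)) \<and>
           (\<forall>\<psi>'. lin_over L (root_field (p ^ e) L) L \<psi>' \<and>
                 (\<forall>y\<in>root_field (p ^ e) L. T (\<psi>' y) = \<phi> (root_map (p ^ e) T y))
                 \<longrightarrow> (\<forall>y\<in>root_field (p ^ e) L. \<psi>' y = \<psi> y))"
proof -
  define q where "q = p ^ e"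
  have pc: "prime CHAR('a)" using assms(1,2) by simp
  have qc: "q = CHAR('a) ^ e" using assms(2) unfolding q_def by simp
  have ext: "finite_extension K L" and Tl: "lin_over K L K T" and ph: "lin_over K (root_field q K) K \<phi>"
    using assms unfolding q_def by auto
  have K: "subfield_of K" and L: "subfield_of L" and KL: "K \<subseteq> L"
    using ext unfolding finite_extension_def by auto
  obtain x0 where x0: "x0 \<in> L" "T x0 \<noteq> 0" using assms(7) by blast
  define R where "R = root_field q L"
  define rm where "rm = root_map q T"
  have Rq: "y \<in> R \<longleftrightarrow> y ^ q \<in> L" for y unfolding R_def root_field_def by simp
  have TL: "\<And>x. x \<in> L \<Longrightarrow> T x \<in> K" using Tl unfolding lin_over_def by blast
  have Tadd: "\<And>x y. x \<in> L \<Longrightarrow> y \<in> L \<Longrightarrow> T (x + y) = T x + T y" using Tl unfolding lin_over_def by blast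
  have Tmul: "\<And>a x. a \<in> K \<Longrightarrow> x \<in> L \<Longrightarrow> T (a * x) = a * T x" using Tl unfolding lin_over_def by blast
  have phK: "\<And>x. x \<in> root_field q K \<Longrightarrow> \<phi> x \<in> K" using ph unfolding lin_over_def by blast
  have phadd: "\<And>x y. x \<in> root_field q K \<Longrightarrow> y \<in> root_field q K \<Longrightarrow> \<phi> (x + y) = \<phi> x + \<phi> y"
    using ph unfolding lin_over_def by blast
  have phmul: "\<And>a x. a \<in> K \<Longrightarrow> x \<in> root_field q K \<Longrightarrow> \<phi> (a * x) = a * \<phi> x"
    using ph unfolding lin_over_def by blast
  have rmq: "rm y ^ q = T (y ^ q)" for y unfolding rm_def by (rule root_map_eq[OF pc qc])
  have rmu: "z ^ q = T (y ^ q) \<Longrightarrow> rm y = z" for y z unfolding rm_def by (rule root_map_unique[OF pc qc])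
  have LR: "x \<in> L \<Longrightarrow> x \<in> R" for x using sf_pow[OF L] Rq by blast
  have mulR: "x * y \<in> R" if x: "x \<in> L" and y: "y \<in> R" for x y
  proof -
    have "(x * y) ^ q = x ^ q * y ^ q" by (rule power_mult_distrib)
    moreover have "x ^ q * y ^ q \<in> L" using sf_pow[OF L x] y[unfolded Rq] by (rule sfE(4)[OF L])
    ultimately show ?thesis unfolding Rq by simp
  qed
  have addR: "y + z \<in> R" if y: "y \<in> R" and z: "z \<in> R" for y z
  proof -
    have "(y + z) ^ q = y ^ q + z ^ q" by (rule frob_add[OF pc qc])
    moreover have "y ^ q + z ^ q \<in> L" using y[unfolded Rq] z[unfolded Rq] by (rule sfE(3)[OF L])
    ultimately show ?thesis unfolding Rq by simp
  qed
  have rmK: "rm y \<in> root_field q K" if y: "y \<in> R" for y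
  proof -
    have "T (y ^ q) \<in> K" using TL y[unfolded Rq] .
    then show ?thesis unfolding root_field_def using rmq[of y] by simp
  qed
  have rm_add: "y \<in> R \<Longrightarrow> z \<in> R \<Longrightarrow> rm (y + z) = rm y + rm z" for y z
  proof -
    assume y: "y \<in> R" and z: "z \<in> R"
    have "(rm y + rm z) ^ q = T (y ^ q) + T (z ^ q)" using frob_add[OF pc qc] rmq by simp
    also have "\<dots> = T ((y + z) ^ q)" using Tadd y z Rq frob_add[OF pc qc] by simp
    finally show ?thesis by (intro rmu)
  qed
  have rm_mul: "a \<in> K \<Longrightarrow> y \<in> R \<Longrightarrow> rm (a * y) = a * rm y" for a y
  proof -
    assume a: "a \<in> K" and y: "y \<in> R"
    have aq: "a ^ q \<in> K" using sf_pow[OF K a] .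
    have "(a * rm y) ^ q = a ^ q * T (y ^ q)" using rmq by (simp add: power_mult_distrib)
    also have "\<dots> = T ((a * y) ^ q)" using Tmul[OF aq] y Rq by (simp add: power_mult_distrib)
    finally show ?thesis by (intro rmu)
  qed
  define F where "F = (\<lambda>y x. \<phi> (rm (x * y)))"
  have linF: "lin_over K L K (F y)" if y: "y \<in> R" for y
    unfolding lin_over_def F_def
  proof (intro conjI ballI)
    fix x assume "x \<in> L" then show "\<phi> (rm (x * y)) \<in> K" using phK rmK mulR y by blast
  next
    fix x z assume x: "x \<in> L" and z: "z \<in> L"
    have "rm ((x + z) * y) = rm (x * y) + rm (z * y)"
      using rm_add[OF mulR[OF x y] mulR[OF z y]] by (simp add: distrib_right)
    then show "\<phi> (rm ((x + z) * y)) = \<phi> (rm (x * y)) + \<phi> (rm (z * y))"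
      using phadd rmK mulR x z y by simp
  next
    fix a x assume a: "a \<in> K" and x: "x \<in> L"
    have "rm (a * x * y) = a * rm (x * y)" using rm_mul[OF a mulR[OF x y]] by (simp add: mult.assoc)
    then show "\<phi> (rm (a * x * y)) = a * \<phi> (rm (x * y))" using phmul a rmK mulR x y by simp
  qed
  have uniq: "c1 = c2" if c: "c1 \<in> L" "c2 \<in> L" and h: "\<forall>x\<in>L. T (c1 * x) = T (c2 * x)" for c1 c2
  proof -
    have m1: "- 1 \<in> K" using sfE(5)[OF K sfE(2)[OF K]] .
    have dL: "c1 - c2 \<in> L" using c by (rule sfE(7)[OF L])
    have dz: "T ((c1 - c2) * x) = 0" if x: "x \<in> L" for x
    proof -
      have "(c1 - c2) * x = c1 * x + (- 1) * (c2 * x)" by (simp add: algebra_simps)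
      moreover have "c1 * x \<in> L" "c2 * x \<in> L" using c x sfE(4)[OF L] by auto
      moreover have "(- 1) * (c2 * x) \<in> L" using m1 KL \<open>c2 * x \<in> L\<close> sfE(4)[OF L] by (meson subsetD)
      ultimately have "T ((c1 - c2) * x) = T (c1 * x) + (- 1) * T (c2 * x)"
        using Tadd[of "c1 * x" "(- 1) * (c2 * x)"] Tmul[OF m1, of "c2 * x"] by simp
      then show ?thesis using h x by simp
    qed
    have "c1 - c2 = 0" by (rule nondeg[OF L dL dz x0])
    then show ?thesis by simp
  qed
  define \<psi> where "\<psi> = (\<lambda>y. SOME c. c \<in> L \<and> (\<forall>x\<in>L. F y x = T (c * x)))"
  have psi: "\<psi> y \<in> L \<and> (\<forall>x\<in>L. F y x = T (\<psi> y * x))" if y: "y \<in> R" for y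
  proof -
    have "\<exists>c\<in>L. \<forall>x\<in>L. F y x = T (c * x)" using duality[OF ext Tl x0 linF[OF y]] .
    then have "\<exists>c. c \<in> L \<and> (\<forall>x\<in>L. F y x = T (c * x))" by blast
    then show ?thesis unfolding \<psi>_def by (rule someI_ex)
  qed
  have uniqpsi: "\<psi> y = c" if y: "y \<in> R" and c: "c \<in> L" and h: "\<forall>x\<in>L. F y x = T (c * x)" for y c
  proof -
    have "\<forall>x\<in>L. T (\<psi> y * x) = T (c * x)" using psi[OF y] h by simp
    then show ?thesis using uniq[of "\<psi> y" c] psi[OF y] c by blast
  qed
  have lin_psi: "lin_over L R L \<psi>"
    unfolding lin_over_def
  proof (intro conjI ballI)
    fix y assume "y \<in> R" then show "\<psi> y \<in> L" using psi by blast
  next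
    fix y z assume y: "y \<in> R" and z: "z \<in> R"
    have cL: "\<psi> y + \<psi> z \<in> L" using psi y z sfE(3)[OF L] by blast
    have "F (y + z) x = T ((\<psi> y + \<psi> z) * x)" if x: "x \<in> L" for x
    proof -
      have "F (y + z) x = F y x + F z x"
        unfolding F_def using rm_add[OF mulR[OF x y] mulR[OF x z]] phadd rmK mulR x y z
        by (simp add: distrib_left)
      also have "\<dots> = T (\<psi> y * x) + T (\<psi> z * x)" using psi y z x by simp
      also have "\<dots> = T ((\<psi> y + \<psi> z) * x)"
        using Tadd psi y z x sfE(4)[OF L] by (simp add: distrib_right)
      finally show ?thesis .
    qed
    then show "\<psi> (y + z) = \<psi> y + \<psi> z" using uniqpsi[OF addR[OF y z] cL] by blast
  next
    fix a y assume a: "a \<in> L" and y: "y \<in> R"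
    have cL: "a * \<psi> y \<in> L" using psi y a sfE(4)[OF L] by blast
    have "F (a * y) x = T (a * \<psi> y * x)" if x: "x \<in> L" for x
    proof -
      have xa: "x * a \<in> L" using x a by (rule sfE(4)[OF L])
      have "F (a * y) x = F y (x * a)" unfolding F_def by (simp add: mult.assoc)
      also have "\<dots> = T (\<psi> y * (x * a))" using psi y xa by blast
      finally show ?thesis by (simp add: algebra_simps)
    qed
    then show "\<psi> (a * y) = a * \<psi> y" using uniqpsi[OF mulR[OF a y] cL] by blast
  qed
  have Tpsi: "T (\<psi> y) = \<phi> (rm y)" if y: "y \<in> R" for y
  proof -
    have "F y 1 = T (\<psi> y * 1)" using psi[OF y] sfE(2)[OF L] by blast
    then show ?thesis unfolding F_def by simp
  qed
  have uniq': "\<psi>' y = \<psi> y" if l: "lin_over L R L \<psi>'" and h: "\<forall>y\<in>R. T (\<psi>' y) = \<phi> (rm y)"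
    and y: "y \<in> R" for \<psi>' y
  proof -
    have cL: "\<psi>' y \<in> L" using l y unfolding lin_over_def by blast
    have "F y x = T (\<psi>' y * x)" if x: "x \<in> L" for x
    proof -
      have "\<psi>' (x * y) = x * \<psi>' y" using l x y unfolding lin_over_def by blast
      then have "T (\<psi>' (x * y)) = T (\<psi>' y * x)" by (simp add: mult.commute)
      moreover have "T (\<psi>' (x * y)) = \<phi> (rm (x * y))" using h mulR[OF x y] by blast
      ultimately show ?thesis unfolding F_def by simp
    qed
    then have "\<psi> y = \<psi>' y" using uniqpsi[OF y cL] by blast
    then show ?thesis by simp
  qed
  show ?thesis
    unfolding q_def[symmetric] R_def[symmetric] rm_def[symmetric]
    using lin_psi Tpsi uniq' by blast
qed

end
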